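(* Let $0\le j\le n$. (1) Suppose $w\in B_n^j(2143)$ and the $j$ indices $i\in\{1,\ldots,n\}$ with $w(i)>0$ are $1\leq i_1<i_2<\cdots<i_j\leq n$. Then $w(i_1)<w(i_2)<\cdots<w(i_j)$. (2) Suppose $w\in B_n^j(1234)$ and the $j$ indices $i\in\{1,\ldots,n\}$ with $w(i)>0$ are $1\leq i_1<\cdots<i_j\leq n$. Then $w(i_1)>w(i_2)>\cdots>w(i_j)$.
   Context: $B_n$ is the group of permutations $w$ of $\{-n,\ldots,-1,1,\ldots,n\}$ with $w(-i)=-w(i)$. $w$ avoids $1234$ if there are no indices $-n\le a<b<c<d\le n$ (nonzero) with $w(a)<w(b)<w(c)<w(d)$; $w$ avoids $2143$ if there are no such indices with $w(b)<w(a)<w(d)<w(c)$. For $\pi\in\{1234,2143\}$, $B_n^j(\pi)$ is the set of $w\in B_n$ avoiding $\pi$ with $w(i)>0$ for exactly $j$ indices $i\in\{1,\ldots,n\}$. *)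

theory Defs
  imports Main
begin

definition signed_dom :: "nat \<Rightarrow> int set" where
  "signed_dom n = {i. i \<noteq> 0 \<and> -int n \<le> i \<and> i \<le> int n}"

text \<open>Hyperoctahedral group B_n: signed permutations, represented as functions on int
  that are bijections of the signed domain, satisfy w(-i) = -w(i), and are the identity
  outside the domain (canonical representative).\<close>
definition B :: "nat \<Rightarrow> (int \<Rightarrow> int) set" where
  "B n = {w. bij_betw w (signed_dom n) (signed_dom n)
              \<and> (\<forall>i \<in> signed_dom n. w (-i) = - w i)
              \<and> (\<forall>i. i \<notin> signed_dom n \<longrightarrow> w i = i)}"

definition avoids_1234 :: "nat \<Rightarrow> (int \<Rightarrow> int) \<Rightarrow> bool" where
  "avoids_1234 n w \<longleftrightarrow> \<not> (\<exists>a \<in> signed_dom n. \<exists>b \<in> signed_dom n. \<exists>c \<in> signed_dom n. \<exists>d \<in> signed_dom n.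
      a < b \<and> b < c \<and> c < d \<and> w a < w b \<and> w b < w c \<and> w c < w d)"

definition avoids_2143 :: "nat \<Rightarrow> (int \<Rightarrow> int) \<Rightarrow> bool" where
  "avoids_2143 n w \<longleftrightarrow> \<not> (\<exists>a \<in> signed_dom n. \<exists>b \<in> signed_dom n. \<exists>c \<in> signed_dom n. \<exists>d \<in> signed_dom n.
      a < b \<and> b < c \<and> c < d \<and> w b < w a \<and> w a < w d \<and> w d < w c)"

definition npos :: "nat \<Rightarrow> (int \<Rightarrow> int) \<Rightarrow> nat" where
  "npos n w = card {i \<in> {1..int n}. w i > 0}"

definition B_j_2143 :: "nat \<Rightarrow> nat \<Rightarrow> (int \<Rightarrow> int) set" where
  "B_j_2143 n j = {w \<in> B n. avoids_2143 n w \<and> npos n w = j}"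

definition B_j_1234 :: "nat \<Rightarrow> nat \<Rightarrow> (int \<Rightarrow> int) set" where
  "B_j_1234 n j = {w \<in> B n. avoids_1234 n w \<and> npos n w = j}"

end

theory Submission
  imports Defs
begin

theorem lemma2p1:
  fixes n j :: nat
  assumes "j \<le> n"
  shows "(\<forall>w \<in> B_j_2143 n j. \<forall>i1 \<in> {1..int n}. \<forall>i2 \<in> {1..int n}.
            i1 < i2 \<and> w i1 > 0 \<and> w i2 > 0 \<longrightarrow> w i1 < w i2)
       \<and> (\<forall>w \<in> B_j_1234 n j. \<forall>i1 \<in> {1..int n}. \<forall>i2 \<in> {1..int n}.
            i1 < i2 \<and> w i1 > 0 \<and> w i2 > 0 \<longrightarrow> w i1 > w i2)"
proof (intro conjI ballI impI)
  fix w i1 i2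
  assume w: "w \<in> B_j_2143 n j" and i1: "i1 \<in> {1..int n}" and i2: "i2 \<in> {1..int n}"
    and h: "i1 < i2 \<and> w i1 > 0 \<and> w i2 > 0"
  have d: "i1 \<in> signed_dom n" "i2 \<in> signed_dom n" "-i1 \<in> signed_dom n" "-i2 \<in> signed_dom n"
    using i1 i2 by (auto simp: signed_dom_def)
  have wB: "w \<in> B n" and av: "avoids_2143 n w" using w by (auto simp: B_j_2143_def)
  have neg: "w (-i1) = - w i1" "w (-i2) = - w i2" using wB d by (auto simp: B_def)
  have inj: "inj_on w (signed_dom n)" using wB by (auto simp: B_def bij_betw_def)
  have ne: "w i1 \<noteq> w i2" using inj d h by (metis inj_on_eq_iff less_irrefl)
  show "w i1 < w i2"
  proof (rule ccontr)
    assume "\<not> w i1 < w i2"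
    hence "w i2 < w i1" using ne by simp
    hence "\<exists>a \<in> signed_dom n. \<exists>b \<in> signed_dom n. \<exists>c \<in> signed_dom n. \<exists>d \<in> signed_dom n.
      a < b \<and> b < c \<and> c < d \<and> w b < w a \<and> w a < w d \<and> w d < w c"
      using d neg h i1 by (intro bexI[of _ "-i2"] bexI[of _ "-i1"] bexI[of _ i1] bexI[of _ i2]) auto
    thus False using av by (simp add: avoids_2143_def)
  qed
next
  fix w i1 i2
  assume w: "w \<in> B_j_1234 n j" and i1: "i1 \<in> {1..int n}" and i2: "i2 \<in> {1..int n}"
    and h: "i1 < i2 \<and> w i1 > 0 \<and> w i2 > 0"
  have d: "i1 \<in> signed_dom n" "i2 \<in> signed_dom n" "-i1 \<in> signed_dom n" "-i2 \<in> signed_dom n"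
    using i1 i2 by (auto simp: signed_dom_def)
  have wB: "w \<in> B n" and av: "avoids_1234 n w" using w by (auto simp: B_j_1234_def)
  have neg: "w (-i1) = - w i1" "w (-i2) = - w i2" using wB d by (auto simp: B_def)
  have inj: "inj_on w (signed_dom n)" using wB by (auto simp: B_def bij_betw_def)
  have ne: "w i1 \<noteq> w i2" using inj d h by (metis inj_on_eq_iff less_irrefl)
  show "w i1 > w i2"
  proof (rule ccontr)
    assume "\<not> w i1 > w i2"
    hence "w i1 < w i2" using ne by simp
    hence "\<exists>a \<in> signed_dom n. \<exists>b \<in> signed_dom n. \<exists>c \<in> signed_dom n. \<exists>d \<in> signed_dom n.
      a < b \<and> b < c \<and> c < d \<and> w a < w b \<and> w b < w c \<and> w c < w d"
      using d neg h i1 by (intro bexI[of _ "-i2"] bexI[of _ "-i1"] bexI[of _ i1] bexI[of _ i2]) auto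
    thus False using av by (simp add: avoids_1234_def)
  qed
qed

end
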